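(* Let $b\ge 2$ be even, $n\ge 0$, and put $f_0=b^{b^n}+1$, $f_1=b^{b^{n+1}}+1$. Then $\mathrm{Ap}(SF(b,n),f_0)=\{0,f_1,2f_1,\dots,b^{b^n}f_1\}$, $F(SF(b,n)) = b^{b^n}f_1 - f_0 = b^{(b+1)b^{n}}-1$, and $g(SF(b,n))=\tfrac12\, b^{(b+1)b^{n}}$.
   Context: For an even integer $b\ge2$ and $n\ge0$, $SF(b,n)=\langle\{b^{b^{n+i}}+1:i\in\mathbb{N}\}\rangle$, the submonoid of $(\mathbb{N},+)$ generated by these numbers (a numerical semigroup). $\mathrm{Ap}(S,x)=\{s\in S:s-x\notin S\}$; $F(S)$ is the greatest integer not in $S$; the genus $g(S)$ is the cardinality of $\mathbb{N}\setminus S$. *)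

theory Defs
  imports Main
begin

inductive_set monoid_gen :: "nat set \<Rightarrow> nat set" for A :: "nat set" where
  zero: "0 \<in> monoid_gen A"
| add: "a \<in> A \<Longrightarrow> s \<in> monoid_gen A \<Longrightarrow> a + s \<in> monoid_gen A"

definition SF :: "nat \<Rightarrow> nat \<Rightarrow> nat set" where
  "SF b n = monoid_gen {b ^ (b ^ (n + i)) + 1 | i. True}"

text \<open>Apery set: elements s of S with s - x not in S (s - x taken in the integers).\<close>
definition Apery :: "nat set \<Rightarrow> nat \<Rightarrow> nat set" where
  "Apery S x = {s \<in> S. \<not> (s \<ge> x \<and> s - x \<in> S)}"

definition Frobenius :: "nat set \<Rightarrow> int" where
  "Frobenius S = (GREATEST z. z \<notin> int ` S)"

definition genus :: "nat set \<Rightarrow> nat" where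
  "genus S = card (UNIV - S)"

end

theory Submission imports Defs begin

lemma rep:
  fixes p q x :: int
  assumes "coprime p q" "0 < p"
  shows "\<exists>a k. 0 \<le> k \<and> k < p \<and> x = a*p + k*q"
proof -
  obtain u v where uv: "u*q + v*p = 1"
    using bezout_int[of q p] assms(1) by (metis coprime_commute coprime_iff_gcd_eq_1)
  define k where "k = (x*u) mod p"
  define d where "d = (x*u) div p"
  have xu: "x*u = k + p*d" unfolding k_def d_def by simp
  have "x = x*(u*q + v*p)" using uv by simp
  also have "\<dots> = (x*u)*q + (x*v)*p" by (simp add: algebra_simps)
  also have "\<dots> = (d*q + x*v)*p + k*q" unfolding xu by (simp add: algebra_simps)
  finally have "x = (d*q + x*v)*p + k*q" .
  moreover have "0 \<le> k" "k < p" using assms(2) unfolding k_def by auto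
  ultimately show ?thesis by blast
qed

lemma memb:
  fixes p q a k x :: int
  assumes "coprime p q" "0 < p" "0 \<le> q" "0 \<le> k" "k < p" "x = a*p + k*q"
  shows "(\<exists>a' k'::nat. x = int a' * p + int k' * q) \<longleftrightarrow> a \<ge> 0"
proof
  assume "a \<ge> 0"
  then show "\<exists>a' k'::nat. x = int a' * p + int k' * q" using assms
    by (intro exI[of _ "nat a"] exI[of _ "nat k"]) auto
next
  assume "\<exists>a' k'::nat. x = int a' * p + int k' * q"
  then obtain a' k' :: nat where e: "x = int a' * p + int k' * q" by blast
  have e2: "(int k' - k) * q = (a - int a') * p" using e assms(6) by (simp add: algebra_simps)
  hence "p dvd (int k' - k) * q" by (metis dvd_triv_right)
  hence "p dvd (int k' - k)" using assms(1) by (simp add: coprime_dvd_mult_left_iff)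
  then obtain t where t: "int k' - k = p * t" by (auto elim: dvdE)
  have "t \<ge> 0"
  proof (rule ccontr)
    assume "\<not> t \<ge> 0"
    hence "t \<le> -1" by simp
    hence "p * t \<le> p * (-1)" using assms(2) by (intro mult_left_mono) auto
    thus False using t assms(5) by simp
  qed
  have "(a - int a') * p = (t*q) * p" using e2 t by (simp add: algebra_simps)
  hence "a - int a' = t*q" using assms(2) by simp
  thus "a \<ge> 0" using \<open>t \<ge> 0\<close> assms(3) by (smt (verit) mult_nonneg_nonneg of_nat_0_le_iff)
qed

definition T :: "nat \<Rightarrow> nat \<Rightarrow> nat set" where
  "T p q = {a*p + k*q | a k. True}"

definition inS :: "int \<Rightarrow> int \<Rightarrow> int \<Rightarrow> bool" where
  "inS p q x \<longleftrightarrow> (\<exists>a k::nat. x = int a * p + int k * q)"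

lemma T_inS: "x \<in> T p q \<longleftrightarrow> inS (int p) (int q) (int x)"
proof
  assume "x \<in> T p q" then obtain a k where "x = a*p + k*q" unfolding T_def by blast
  then show "inS (int p) (int q) (int x)" unfolding inS_def by (intro exI[of _ a] exI[of _ k]) simp
next
  assume "inS (int p) (int q) (int x)"
  then obtain a k :: nat where "int x = int a * int p + int k * int q" unfolding inS_def by blast
  hence "x = a*p + k*q" by (metis of_nat_add of_nat_eq_iff of_nat_mult)
  then show "x \<in> T p q" unfolding T_def by blast
qed

lemma inS_nonneg: "0 \<le> p \<Longrightarrow> 0 \<le> q \<Longrightarrow> inS p q x \<Longrightarrow> 0 \<le> x"
  unfolding inS_def by auto

lemma memb':
  fixes p q a k x :: int
  assumes "coprime p q" "0 < p" "0 \<le> q" "0 \<le> k" "k < p" "x = a*p + k*q"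
  shows "inS p q x \<longleftrightarrow> a \<ge> 0"
  using memb[OF assms] unfolding inS_def .

lemma symm:
  fixes p q x :: int
  assumes "coprime p q" "0 < p" "0 \<le> q"
  shows "inS p q x \<longleftrightarrow> \<not> inS p q (p*q - p - q - x)"
proof -
  obtain a k where ak: "0 \<le> k" "k < p" "x = a*p + k*q" using rep[OF assms(1,2)] by blast
  have e: "p*q - p - q - x = (-1-a)*p + (p-1-k)*q" using ak(3) by (simp add: algebra_simps)
  show ?thesis using memb'[OF assms ak] memb'[OF assms _ _ e] ak(1,2) by auto
qed

lemma apery_T:
  assumes "coprime p q" "0 < p"
  shows "Apery (T p q) p = {k*q | k. k < p}"
proof -
  have cp: "coprime (int p) (int q)" using assms by simp
  have pp: "0 < int p" using assms by simp
  have qq: "0 \<le> int q" by simp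
  show ?thesis
  proof (intro equalityI subsetI)
    fix s assume "s \<in> Apery (T p q) p"
    hence sT: "s \<in> T p q" and na: "\<not> (s \<ge> p \<and> s - p \<in> T p q)" unfolding Apery_def by auto
    obtain a k where ak: "0 \<le> k" "k < int p" "int s = a*int p + k*int q" using rep[OF cp pp] by blast
    have a0: "a \<ge> 0" using memb'[OF cp pp qq ak] sT T_inS by simp
    have "a = 0"
    proof (rule ccontr)
      assume "a \<noteq> 0" hence a1: "a \<ge> 1" using a0 by simp
      have "int s \<ge> int p"
      proof -
        have "a * int p \<ge> 1 * int p" using a1 pp by (intro mult_right_mono) auto
        moreover have "k * int q \<ge> 0" using ak(1) by simp
        ultimately show ?thesis using ak(3) by linarith
      qed
      hence sp: "s \<ge> p" by simp
      have "int (s - p) = (a-1)*int p + k*int q" using sp ak(3) by (simp add: algebra_simps)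
      hence "s - p \<in> T p q" using memb'[OF cp pp qq ak(1,2)] a1 T_inS by simp
      thus False using na sp by simp
    qed
    hence "int s = int (nat k * q)" using ak by simp
    hence "s = nat k * q" by (simp only: of_nat_eq_iff)
    moreover have "nat k < p" using ak by simp
    ultimately show "s \<in> {k*q | k. k < p}" by blast
  next
    fix s assume "s \<in> {k*q | k. k < p}"
    then obtain k where k: "s = k*q" "k < p" by blast
    have sT: "s \<in> T p q" unfolding T_def using k by (intro CollectI exI[of _ 0] exI[of _ k]) simp
    have "\<not> (s \<ge> p \<and> s - p \<in> T p q)"
    proof
      assume h: "s \<ge> p \<and> s - p \<in> T p q"
      have e: "int (s - p) = (-1)*int p + int k*int q" using h k by (simp add: algebra_simps)
      have "\<not> inS (int p) (int q) (int (s - p))" using memb'[OF cp pp qq _ _ e] k by simp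
      moreover have "inS (int p) (int q) (int (s - p))" using h T_inS by blast
      ultimately show False by blast
    qed
    thus "s \<in> Apery (T p q) p" using sT unfolding Apery_def by simp
  qed
qed

lemma frob_T:
  assumes "coprime p q" "0 < p"
  shows "Frobenius (T p q) = int p * int q - int p - int q"
proof -
  have cp: "coprime (int p) (int q)" using assms by simp
  have pp: "0 < int p" using assms by simp
  have qq: "0 \<le> int q" by simp
  let ?F = "int p * int q - int p - int q"
  have mem: "z \<in> int ` T p q \<longleftrightarrow> inS (int p) (int q) z" for z
  proof
    assume "z \<in> int ` T p q" thus "inS (int p) (int q) z" using T_inS by auto
  next
    assume h: "inS (int p) (int q) z"
    hence "z \<ge> 0" using inS_nonneg[of "int p" "int q" z] by simp
    hence "z = int (nat z)" by simp
    moreover have "nat z \<in> T p q" using h T_inS \<open>z \<ge> 0\<close> by simp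
    ultimately show "z \<in> int ` T p q" by blast
  qed
  have "\<not> inS (int p) (int q) ?F"
    using symm[OF cp pp qq, of 0] unfolding inS_def by (auto intro!: exI[of _ 0])
  moreover have "y \<le> ?F" if "\<not> inS (int p) (int q) y" for y
  proof (rule ccontr)
    assume "\<not> y \<le> ?F"
    hence "?F - y < 0" by simp
    hence "\<not> inS (int p) (int q) (?F - y)" using inS_nonneg[of "int p" "int q" "?F - y"] pp by force
    thus False using symm[OF cp pp qq, of y] that by simp
  qed
  ultimately show ?thesis unfolding Frobenius_def mem
    by (intro Greatest_equality) auto
qed

lemma genus_T:
  assumes "coprime p q" "2 \<le> p" "2 \<le> q"
  shows "2 * genus (T p q) = (p - 1) * (q - 1)"
proof -
  have cp: "coprime (int p) (int q)" using assms by simp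
  have pp: "0 < int p" using assms by simp
  have qq: "0 \<le> int q" by simp
  define N where "N = (p - 1) * (q - 1) - 1"
  have pos: "(p - 1) * (q - 1) \<ge> 1"
  proof -
    have "p - 1 \<ge> 1" "q - 1 \<ge> 1" using assms by auto
    thus ?thesis by (metis mult_le_mono nat_mult_1)
  qed
  have NF: "int N = int p * int q - int p - int q"
  proof -
    define M where "M = (p - 1) * (q - 1)"
    have "int M = (int p - 1) * (int q - 1)" unfolding M_def using assms by (simp add: of_nat_diff)
    moreover have "int N = int M - 1" unfolding N_def M_def using pos by (simp add: of_nat_diff)
    ultimately show ?thesis by (simp add: algebra_simps)
  qed
  let ?G = "UNIV - T p q" and ?H = "T p q \<inter> {0..N}"
  have sym: "x \<in> T p q \<longleftrightarrow> \<not> inS (int p) (int q) (int N - int x)" for x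
    using symm[OF cp pp qq, of "int x"] T_inS NF by simp
  have GN: "?G \<subseteq> {0..N}"
  proof
    fix x assume "x \<in> ?G"
    hence "inS (int p) (int q) (int N - int x)" using sym by simp
    hence "int N - int x \<ge> 0" using inS_nonneg[of "int p" "int q" "int N - int x"] pp by simp
    thus "x \<in> {0..N}" by simp
  qed
  have bij: "bij_betw (\<lambda>x. N - x) ?G ?H"
  proof (rule bij_betw_imageI)
    show "inj_on (\<lambda>x. N - x) ?G"
    proof (rule inj_onI)
      fix x y assume "x \<in> ?G" "y \<in> ?G" "N - x = N - y"
      moreover have "x \<le> N" "y \<le> N" using GN \<open>x \<in> ?G\<close> \<open>y \<in> ?G\<close> by auto
      ultimately show "x = y" by simp
    qed
    show "(\<lambda>x. N - x) ` ?G = ?H"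
    proof (intro equalityI subsetI)
      fix y assume "y \<in> (\<lambda>x. N - x) ` ?G"
      then obtain x where x: "x \<in> ?G" "y = N - x" by blast
      have "x \<le> N" using GN x by auto
      hence "int y = int N - int x" using x by simp
      hence "inS (int p) (int q) (int y)" using x sym by simp
      thus "y \<in> ?H" using x T_inS by simp
    next
      fix y assume y: "y \<in> ?H"
      hence "y \<le> N" by simp
      have "int N - int (N - y) = int y" using \<open>y \<le> N\<close> by simp
      hence "N - y \<in> ?G" using y sym[of "N - y"] T_inS by simp
      moreover have "y = N - (N - y)" using \<open>y \<le> N\<close> by simp
      ultimately show "y \<in> (\<lambda>x. N - x) ` ?G" by blast
    qed
  qed
  have fG: "finite ?G" using GN finite_subset by blast
  have "card ?G = card ?H" using bij_betw_same_card[OF bij] .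
  moreover have "card ?G + card ?H = card {0..N}"
  proof -
    have "?G \<union> ?H = {0..N}" using GN by auto
    moreover have "?G \<inter> ?H = {}" by auto
    ultimately show ?thesis using card_Un_disjoint[OF fG, of ?H] by simp
  qed
  ultimately have "2 * card ?G = N + 1" by simp
  moreover have "N + 1 = (p - 1) * (q - 1)" unfolding N_def using pos by linarith
  ultimately show ?thesis unfolding genus_def by simp
qed

lemma even_pow_mod:
  fixes B e :: nat
  assumes "even e" "1 \<le> B"
  shows "B ^ e mod (B + 1) = 1"
proof -
  obtain m where m: "e = 2*m" using assms(1) by blast
  have "B^2 = (B+1)*(B-1) + 1" using assms(2) by (simp add: power2_eq_square algebra_simps)
  hence b2: "B^2 mod (B+1) = 1" using assms(2) by (metis mod_mult_self3 add.commute mod_less less_add_same_cancel2 zero_less_one le_add2 order_le_less_trans less_1_mult one_less_numeral_iff semiring_norm(76) nat_less_le Suc_eq_plus1 Suc_le_lessD add_gr_0 mod_mult_self2 mult.commute)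
  have "B ^ e = (B^2)^m" using m by (simp add: power_mult)
  hence "B ^ e mod (B+1) = ((B^2) mod (B+1))^m mod (B+1)" by (simp add: power_mod)
  also have "\<dots> = 1" using b2 assms(2) by simp
  finally show ?thesis .
qed

lemma SF_eq:
  fixes b n :: nat
  assumes "even b" "b \<ge> 2"
  shows "SF b n = T (b^(b^n) + 1) (b^(b^(n+1)) + 1)"
proof -
  define B where "B = b^(b^n)"
  define p where "p = B + 1"
  define q where "q = b^(b^(n+1)) + 1"
  have B1: "1 \<le> B" unfolding B_def using assms by simp
  have qB: "b^(b^(n+i)) = B^(b^i)" for i
    unfolding B_def by (simp add: power_add power_mult)
  have gmod: "(b^(b^(n+i)) + 1) mod p = 2 mod p" if "i \<ge> 1" for i
  proof -
    have "even (b^i)" using assms(1) that by simp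
    hence "B^(b^i) mod p = 1" unfolding p_def using even_pow_mod B1 by blast
    thus ?thesis unfolding qB by (metis mod_add_left_eq one_add_one)
  qed
  have qmod: "q mod p = 2 mod p" unfolding q_def using gmod[of 1] by simp
  let ?A = "{b ^ (b ^ (n + i)) + 1 | i. True}"
  have add_T: "x \<in> T p q \<Longrightarrow> y \<in> T p q \<Longrightarrow> x + y \<in> T p q" for x y
  proof -
    assume "x \<in> T p q" "y \<in> T p q"
    then obtain a k a' k' where "x = a*p + k*q" "y = a'*p + k'*q" unfolding T_def by blast
    hence "x + y = (a+a')*p + (k+k')*q" by (simp add: algebra_simps)
    thus ?thesis unfolding T_def by blast
  qed
  have genT: "g \<in> T p q" if "g \<in> ?A" for g
  proof -
    obtain i where g: "g = b ^ (b ^ (n + i)) + 1" using \<open>g \<in> ?A\<close> by blast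
    show ?thesis
    proof (cases "i = 0")
      case True
      hence "g = 1*p + 0*q" using g unfolding p_def B_def by simp
      thus ?thesis unfolding T_def by blast
    next
      case False
      have ex: "b^(n+1) \<le> b^(n+i)" using False assms(2) by (intro power_increasing) auto
      have "b^(b^(n+1)) \<le> b^(b^(n+i))" using power_increasing[OF ex, of b] assms(2) by linarith
      then have qg: "q \<le> g" unfolding q_def g by simp
      have "g mod p = q mod p" using gmod[of i] False qmod g by simp
      hence "p dvd g - q" using qg mod_eq_dvd_iff_nat by blast
      then obtain c where "g - q = p*c" by blast
      hence "g = c*p + 1*q" using qg by (simp add: mult.commute)
      thus ?thesis unfolding T_def by blast
    qed
  qed
  have sub1: "s \<in> T p q" if "s \<in> monoid_gen ?A" for s
    using that
  proof (induction rule: monoid_gen.induct)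
    case zero
    have "(0::nat) = 0*p + 0*q" by simp
    thus ?case unfolding T_def by blast
  next
    case (add a s)
    thus ?case using genT add_T by blast
  qed
  have pA: "p \<in> ?A" unfolding p_def B_def by (intro CollectI exI[of _ 0]) simp
  have qA: "q \<in> ?A" unfolding q_def by (intro CollectI exI[of _ 1]) simp
  have kq: "k*q \<in> monoid_gen ?A" for k
  proof (induction k)
    case 0 show ?case by (simp add: monoid_gen.zero)
  next
    case (Suc k) thus ?case using monoid_gen.add[OF qA Suc] by simp
  qed
  have akq: "a*p + k*q \<in> monoid_gen ?A" for a k
  proof (induction a)
    case 0 show ?case using kq by simp
  next
    case (Suc a) thus ?case using monoid_gen.add[OF pA Suc] by (simp add: add.assoc)
  qed
  have "SF b n = T p q"
    unfolding SF_def using sub1 akq unfolding T_def by blast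
  thus ?thesis unfolding p_def q_def B_def .
qed

theorem mainTheorem20:
  fixes b n :: nat
  assumes "even b" and "b \<ge> 2"
  defines "f0 \<equiv> b ^ (b ^ n) + 1"
      and "f1 \<equiv> b ^ (b ^ (n + 1)) + 1"
  shows "Apery (SF b n) f0 = {k * f1 | k. k \<le> b ^ (b ^ n)}
    \<and> Frobenius (SF b n) = int (b ^ (b ^ n) * f1) - int f0
    \<and> int (b ^ (b ^ n) * f1) - int f0 = int (b ^ ((b + 1) * b ^ n)) - 1
    \<and> 2 * genus (SF b n) = b ^ ((b + 1) * b ^ n)"
proof -
  define B where "B = b^(b^n)"
  have S: "SF b n = T f0 f1" unfolding f0_def f1_def using SF_eq[OF assms(1,2)] .
  have e1: "1 \<le> b^n" using assms(2) by simp
  have "b^1 \<le> b^(b^n)" using power_increasing[OF e1, of b] assms(2) by linarith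
  hence B2: "2 \<le> B" unfolding B_def using assms(2) by simp
  have evB: "even B" unfolding B_def using assms(1,2) by simp
  have "b^(b^(n+1)) = (b^(b^n))^b" by (simp add: power_mult[symmetric] mult.commute)
  hence f1B: "f1 = B^b + 1" unfolding f1_def B_def by simp
  have f0B: "f0 = B + 1" unfolding f0_def B_def by simp
  have "B^b mod (B+1) = 1" using even_pow_mod[OF assms(1)] B2 by simp
  hence "f1 mod f0 = 2 mod f0" unfolding f1B f0B by (metis mod_add_left_eq one_add_one)
  moreover have "coprime f0 2" using evB f0B by simp
  ultimately have cop: "coprime f0 f1" by (metis coprime_mod_right_iff gr_implies_not0 f0B zero_less_Suc Suc_eq_plus1 coprime_commute)
  have f0pos: "0 < f0" using f0B by simp
  have Bb: "B^b \<ge> 1" using B2 by simp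
  have pw: "b ^ ((b + 1) * b ^ n) = B * B^b" unfolding B_def
    by (simp add: power_mult[symmetric] power_add[symmetric] algebra_simps)
  have A: "Apery (SF b n) f0 = {k * f1 | k. k \<le> b ^ (b ^ n)}"
    unfolding S apery_T[OF cop f0pos] using f0B B_def by (auto simp: less_Suc_eq_le)
  have F: "Frobenius (SF b n) = int (b ^ (b ^ n) * f1) - int f0"
  proof -
    have "Frobenius (SF b n) = int f0 * int f1 - int f0 - int f1" unfolding S by (rule frob_T[OF cop f0pos])
    thus ?thesis unfolding f0B B_def[symmetric] by (simp add: algebra_simps)
  qed
  have E: "int (b ^ (b ^ n) * f1) - int f0 = int (b ^ ((b + 1) * b ^ n)) - 1"
    unfolding pw f0B f1B B_def[symmetric] by (simp add: algebra_simps)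
  have G: "2 * genus (SF b n) = b ^ ((b + 1) * b ^ n)"
  proof -
    have "2 * genus (SF b n) = (f0 - 1) * (f1 - 1)" unfolding S by (rule genus_T[OF cop]) (use f0B f1B B2 Bb in auto)
    thus ?thesis unfolding pw using f0B f1B by simp
  qed
  show ?thesis using A F E G by blast
qed

end
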